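(* Let $a,n,r\in\mathbb{N}$ (so $r\ge 1$), $k_1,\ldots,k_n\in\mathbb{N}$, and let $f_1,\ldots,f_n,g_1,\ldots,g_n$ be arbitrary arithmetic functions. Then $$\sum_{j=1}^{K^a} j^r\prod_{i=1}^n s^{(a)}_{f_i,g_i,\mathbf 1}(k_i,j)=\frac{K^{ar}}{2}\prod_{i=1}^n (f_i*g_i)(k_i)+\frac{K^{a(r+1)}}{r+1}\sum_{m=0}^{\lfloor r/2\rfloor}\binom{r+1}{2m}\frac{B_{2m}}{K^{2am}}\sum_{d_1|k_1,\ldots,d_n|k_n}\bigl(\operatorname{lcm}(d_1,\ldots,d_n)\bigr)^{a(2m-1)}\prod_{i=1}^n f_i(d_i)\,g_i\Bigl(\frac{k_i}{d_i}\Bigr).$$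
   Context: An arithmetic function is a map $\mathbb{N}\to\mathbb{C}$; $\mathbf 1$ denotes the constant function $\mathbf 1(n)=1$, and $(f*g)(n)=\sum_{d|n}f(d)g(n/d)$ is the Dirichlet convolution. For $a\in\mathbb{N}$, $s^{(a)}_{f,g,\mathbf 1}(k,j)=\sum_{d|k,\ d^a|j} f(d)\,g(k/d)$ for $k,j\in\mathbb{N}$. $K=\operatorname{lcm}(k_1,\ldots,k_n)$. The Bernoulli numbers $B_m$ are defined by $\frac{t}{e^t-1}=\sum_{m\ge0}B_m\frac{t^m}{m!}$. *)

theory Defs
  imports "HOL-Analysis.Analysis" "HOL-Computational_Algebra.Formal_Power_Series"
begin

definition bernoulli_num :: "nat \<Rightarrow> real" where
  "bernoulli_num m = fact m * fps_nth (fps_X / (fps_exp 1 - 1)) m"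

definition dirichlet_conv :: "(nat \<Rightarrow> complex) \<Rightarrow> (nat \<Rightarrow> complex) \<Rightarrow> nat \<Rightarrow> complex" where
  "dirichlet_conv f g n = (\<Sum>d | d dvd n. f d * g (n div d))"

definition s_fun :: "nat \<Rightarrow> (nat \<Rightarrow> complex) \<Rightarrow> (nat \<Rightarrow> complex) \<Rightarrow> nat \<Rightarrow> nat \<Rightarrow> complex" where
  "s_fun a f g k j = (\<Sum>d | d dvd k \<and> d ^ a dvd j. f d * g (k div d))"

end

theory Submission imports Defs begin
abbreviation "BB \<equiv> fps_X / (fps_exp (1::real) - 1)"
lemma E1_nz: "(fps_exp (1::real) - 1) \<noteq> 0"
  by (metis fps_exp_eq_fps_const_iff fps_const_1_eq_1 right_minus_eq zero_neq_one)
lemma sd: "subdegree (fps_exp (1::real) - 1) = 1"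
  apply (rule subdegreeI) apply auto done
lemma B_mult: "BB * (fps_exp 1 - 1) = fps_X"
proof -
  have "(fps_exp (1::real) - 1) dvd fps_X"
    using sd E1_nz by (simp add: fps_dvd_iff)
  thus ?thesis by simp
qed

lemma B_refl: "BB oo (-fps_X) = fps_X + BB"
proof -
  let ?E = "fps_exp (1::real)"
  let ?C = "BB oo (-fps_X)"
  have "(BB * (?E - 1)) oo (-fps_X) = fps_X oo (-fps_X)" by (simp only: B_mult)
  also have "fps_X oo (-fps_X) = (-fps_X :: real fps)" by simp
  also have "(BB * (?E - 1)) oo (-fps_X) = ?C * ((?E - 1) oo (-fps_X))"
    by (rule fps_compose_mult_distrib) simp
  also have "(?E - 1) oo (-fps_X) = fps_exp (-1) - 1"
    by (simp add: fps_compose_sub_distrib)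
  finally have c1: "?C * (fps_exp (-1) - 1) = - fps_X" .
  have inv: "fps_exp (-1) * ?E = 1"
    using fps_exp_add_mult[of "-1::real" 1] by simp
  have "?C * (1 - ?E) = ?C * (fps_exp (-1) * ?E - ?E)" by (simp only: inv)
  also have "\<dots> = (?C * (fps_exp (-1) - 1)) * ?E" by (simp only: left_diff_distrib right_diff_distrib mult.assoc mult_1_left)
  also have "\<dots> = - fps_X * ?E" by (simp only: c1)
  finally have c2: "?C * (1 - ?E) = - fps_X * ?E" .
  have "?C * (?E - 1) = - (?C * (1 - ?E))" by (simp only: right_diff_distrib minus_diff_eq)
  also have "\<dots> = fps_X * ?E" by (simp only: c2 minus_mult_left minus_minus)
  also have "\<dots> = fps_X * (?E - 1) + fps_X" by (simp add: right_diff_distrib)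
  also have "\<dots> = fps_X * (?E - 1) + BB * (?E - 1)" by (simp only: B_mult)
  also have "\<dots> = (fps_X + BB) * (?E - 1)" by (simp only: distrib_right)
  finally show ?thesis using E1_nz by simp
qed

lemma B_coeff: "(-1)^n * (fps_nth BB n) = (if n = 1 then 1 else 0) + fps_nth BB n"
proof -
  have "fps_nth (BB oo (-fps_X)) n = fps_nth (fps_X + BB) n" by (simp add: B_refl)
  thus ?thesis by (simp add: fps_compose_uminus')
qed

lemma B1: "bernoulli_num 1 = -1/2"
  using B_coeff[of 1] by (simp add: bernoulli_num_def)

lemma B_odd: "odd n \<Longrightarrow> n \<noteq> 1 \<Longrightarrow> bernoulli_num n = 0"
  using B_coeff[of n] by (simp add: bernoulli_num_def)

lemma gen: "fps_X * (\<Sum>t<N. fps_exp (real t)) = BB * (fps_exp (real N) - 1)"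
proof -
  have "BB * (fps_exp (real N) - 1) = BB * (fps_exp 1 ^ N - 1)"
    by (simp add: fps_exp_power_mult)
  also have "\<dots> = BB * (fps_exp 1 - 1) * (\<Sum>t<N. fps_exp 1 ^ t)"
    by (simp add: power_diff_1_eq mult.assoc)
  also have "\<dots> = fps_X * (\<Sum>t<N. fps_exp (real t))"
    by (simp add: B_mult fps_exp_power_mult)
  finally show ?thesis by simp
qed

lemma faul0: "(\<Sum>t<N. real t ^ r) = 
   (\<Sum>i\<le>r. real ((r+1) choose i) * bernoulli_num i * real N ^ (r + 1 - i)) / real (r+1)"
proof -
  have "fps_nth (fps_X * (\<Sum>t<N. fps_exp (real t))) (Suc r) = fps_nth (BB * (fps_exp (real N) - 1)) (Suc r)"
    by (simp add: gen)
  hence "(\<Sum>t<N. real t ^ r / fact r) = (\<Sum>i=0..Suc r. fps_nth BB i * fps_nth (fps_exp (real N) - 1) (Suc r - i))"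
    unfolding fps_X_mult_nth by (simp add: fps_mult_nth fps_sum_nth del: fps_X_mult_nth)
  also have "\<dots> = (\<Sum>i\<le>r. fps_nth BB i * (real N ^ (Suc r - i) / fact (Suc r - i)))"
    by (simp add: atLeast0AtMost sum.atMost_Suc)
  finally have e: "(\<Sum>t<N. real t ^ r) / fact r = (\<Sum>i\<le>r. fps_nth BB i * (real N ^ (Suc r - i) / fact (Suc r - i)))"
    by (simp add: sum_divide_distrib)
  have "(\<Sum>i\<le>r. real ((r+1) choose i) * bernoulli_num i * real N ^ (r + 1 - i)) / real (r+1)
     = fact r * (\<Sum>i\<le>r. fps_nth BB i * (real N ^ (Suc r - i) / fact (Suc r - i)))"
    unfolding sum_divide_distrib sum_distrib_left
  proof (rule sum.cong)
    fix i assume "i \<in> {..r}"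
    hence i: "i \<le> Suc r" by simp
    have h: "real ((r+1) choose i) * fact i * fact (Suc r - i) = fact r * real (r+1)"
      using binomial_fact_lemma[OF i] by (metis (mono_tags, lifting) Suc_eq_plus1 fact_Suc mult.commute mult.left_commute of_nat_fact of_nat_mult)
    have "real ((r+1) choose i) * bernoulli_num i * real N ^ (r + 1 - i) / real (r+1)
      = (real ((r+1) choose i) * fact i * fact (Suc r - i)) * (fps_nth BB i * real N ^ (Suc r - i)) / (fact (Suc r - i) * real (r+1))"
      by (simp add: bernoulli_num_def)
    also have "\<dots> = fact r * real (r+1) * (fps_nth BB i * real N ^ (Suc r - i)) / (fact (Suc r - i) * real (r+1))"
      by (simp only: h)
    also have "\<dots> = fact r * (fps_nth BB i * (real N ^ (Suc r - i) / fact (Suc r - i)))"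
      by simp
    finally show "real ((r+1) choose i) * bernoulli_num i * real N ^ (r + 1 - i) / real (r+1) =
        fact r * (fps_nth BB i * (real N ^ (Suc r - i) / fact (Suc r - i)))" .
  qed simp
  with e show ?thesis by (simp add: field_simps)
qed

lemma faul:
  assumes "r \<ge> 1"
  shows "(\<Sum>t=1..N. real t ^ r) = real N ^ r / 2 +
    (\<Sum>m=0..r div 2. real ((r+1) choose (2*m)) * bernoulli_num (2*m) * real N ^ (r+1-2*m)) / real (r+1)"
proof -
  define h where "h i = real ((r+1) choose i) * bernoulli_num i * real N ^ (r + 1 - i)" for i
  have s1: "(\<Sum>t=1..N. real t ^ r) = (\<Sum>t<N. real t ^ r) + real N ^ r"
  proof -
    have "(\<Sum>t<Suc N. real t ^ r) = (\<Sum>t\<in>{0..N}. real t ^ r)" by (simp add: atLeast0AtMost lessThan_Suc_atMost)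
    also have "\<dots> = (\<Sum>t=1..N. real t ^ r)" using assms
      by (simp add: sum.atLeast_Suc_atMost)
    finally show ?thesis by simp
  qed
  have split: "(\<Sum>i\<le>r. h i) = (\<Sum>i\<le>r. if even i then h i else 0) + (\<Sum>i\<le>r. if odd i then h i else 0)"
    by (subst sum.distrib[symmetric]) (rule sum.cong, auto)
  have odd: "(\<Sum>i\<le>r. if odd i then h i else 0) = (\<Sum>i\<le>r. if i = 1 then h 1 else 0)"
    by (rule sum.cong) (auto simp: h_def B_odd)
  also have "\<dots> = h 1" using assms by simp
  finally have odd': "(\<Sum>i\<le>r. if odd i then h i else 0) = - real (r+1) * real N ^ r / 2"
    using B1 by (simp add: h_def algebra_simps)
  have "(\<Sum>i\<le>r. if even i then h i else 0) = (\<Sum>i\<in>{i\<in>{..r}. even i}. h i)"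
    by (rule sum.inter_filter[symmetric]) simp
  also have "{i\<in>{..r}. even i} = (\<lambda>m. 2*m) ` {0..r div 2}"
  proof (rule set_eqI, rule iffI)
    fix i assume "i \<in> {i\<in>{..r}. even i}"
    then obtain m where "i = 2*m" "2*m \<le> r" by (auto elim!: evenE)
    thus "i \<in> (\<lambda>m. 2*m) ` {0..r div 2}" by auto
  qed auto
  also have "(\<Sum>i\<in>(\<lambda>m. 2*m) ` {0..r div 2}. h i) = (\<Sum>m=0..r div 2. h (2*m))"
    by (subst sum.reindex) (auto simp: inj_on_def)
  finally have even: "(\<Sum>i\<le>r. if even i then h i else 0) = (\<Sum>m=0..r div 2. h (2*m))" .
  show ?thesis
    unfolding s1 faul0 h_def[symmetric] split odd' even
    by (simp add: field_simps h_def)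
qed

lemma faul_c:
  assumes "r \<ge> 1"
  shows "(\<Sum>t=1..N. (of_nat t::complex) ^ r) = of_nat N ^ r / 2 +
    (\<Sum>m=0..r div 2. of_nat ((r+1) choose (2*m)) * of_real (bernoulli_num (2*m)) * of_nat N ^ (r+1-2*m)) / of_nat (r+1)"
proof -
  have "of_real (\<Sum>t=1..N. real t ^ r) = (of_real (real N ^ r / 2 +
    (\<Sum>m=0..r div 2. real ((r+1) choose (2*m)) * bernoulli_num (2*m) * real N ^ (r+1-2*m)) / real (r+1)) :: complex)"
    using faul[OF assms] by simp
  thus ?thesis by simp
qed

lemma lcm_pow: "lcm (x^a) (y^a) = (lcm x y)^a" for x y :: nat
proof (cases "gcd x y = 0")
  case True
  thus ?thesis by (cases a) auto
next
  case False
  have "lcm (x^a) (y^a) * gcd x y ^ a = lcm (x^a) (y^a) * gcd (x^a) (y^a)" by simp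
  also have "\<dots> = x^a * y^a" by (metis prod_gcd_lcm_nat mult.commute)
  also have "\<dots> = lcm x y ^ a * gcd x y ^ a"
  proof -
    have "x*y = lcm x y * gcd x y" by (metis prod_gcd_lcm_nat mult.commute)
    thus ?thesis by (simp add: power_mult_distrib[symmetric])
  qed
  finally show ?thesis using False by auto
qed

lemma Lcm_pow: "finite S \<Longrightarrow> Lcm ((\<lambda>i. d i ^ a) ` S) = Lcm (d ` S) ^ a" for d :: "'a \<Rightarrow> nat"
  by (induction S rule: finite_induct) (auto simp: lcm_pow)

lemma key_pow:
  fixes x y N :: complex
  assumes "x \<noteq> 0" "y \<noteq> 0" "x * N = y" "2*m \<le> r"
  shows "x^r * N^(r+1-2*m) = y^(r+1) / y^(2*m) * (x^(2*m) / x)"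
proof -
  define s where "s = r+1-2*m"
  have rs: "r+1 = s + 2*m" using assms(4) by (simp add: s_def)
  have yy: "y^(r+1) = y^s * y^(2*m)" by (simp only: rs power_add)
  have "y^(r+1) / y^(2*m) * (x^(2*m) / x) = y^s * (x^(2*m) / x)"
    using assms(2) unfolding yy by simp
  also have "\<dots> = x^s * N^s * x^(2*m) / x" by (simp add: assms(3)[symmetric] power_mult_distrib)
  also have "\<dots> = x^(r+1) / x * N^s" by (simp only: rs power_add) simp
  also have "\<dots> = x^r * N^s" using assms(1) by simp
  finally show ?thesis by (simp add: s_def)
qed

lemma powi_eq:
  assumes "L \<noteq> 0"
  shows "(of_nat L :: complex) powi (int a * (2 * int m - 1)) = (of_nat L ^ a)^(2*m) / (of_nat L ^ a)"
proof -
  have "(of_nat L :: complex) powi (int a * (2 * int m - 1)) = ((of_nat L :: complex) ^ a) powi (2 * int m - 1)"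
    by (simp add: power_int_mult)
  also have "\<dots> = ((of_nat L :: complex) ^ a) powi (2 * int m) / ((of_nat L :: complex) ^ a) powi 1"
    by (rule power_int_diff) (use assms in simp)
  also have "((of_nat L :: complex) ^ a) powi (2 * int m) = (of_nat L ^ a)^(2*m)"
    by (metis of_nat_mult of_nat_numeral power_int_of_nat)
  finally show ?thesis by simp
qed

lemma mult_sum:
  fixes M q :: nat
  assumes "M > 0"
  shows "(\<Sum>j=1..M*q. if M dvd j then (of_nat j::complex)^r else 0) = of_nat M^r * (\<Sum>t=1..q. of_nat t ^ r)"
proof -
  have "(\<Sum>j=1..M*q. if M dvd j then (of_nat j::complex)^r else 0) = (\<Sum>j\<in>{j\<in>{1..M*q}. M dvd j}. (of_nat j::complex)^r)"
    by (rule sum.inter_filter[symmetric]) simp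
  also have "{j\<in>{1..M*q}. M dvd j} = (\<lambda>t. M*t) ` {1..q}"
  proof (rule set_eqI, rule iffI)
    fix j assume "j \<in> {j\<in>{1..M*q}. M dvd j}"
    hence j: "1 \<le> j" "j \<le> M*q" "M dvd j" by auto
    then obtain t where "j = M*t" by (auto elim: dvdE)
    with j have t: "j = M*t" "1 \<le> M*t" "M*t \<le> M*q" by auto
    hence "1 \<le> t" "t \<le> q" using assms by (auto simp: Suc_le_eq)
    thus "j \<in> (\<lambda>t. M*t) ` {1..q}" by (intro image_eqI[where x=t]) (use t in auto)
  next
    fix j assume "j \<in> (\<lambda>t. M*t) ` {1..q}"
    then obtain t where "t \<in> {1..q}" "j = M*t" by blast
    hence "j = M*t" "1 \<le> t" "t \<le> q" by auto
    thus "j \<in> {j\<in>{1..M*q}. M dvd j}" using assms by (auto simp: Suc_le_eq)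
  qed
  also have "(\<Sum>j\<in>(\<lambda>t. M*t) ` {1..q}. (of_nat j::complex)^r) = (\<Sum>t=1..q. (of_nat (M*t)::complex)^r)"
    by (rule sum.reindex_cong[where l="\<lambda>t. M*t"]) (use assms in \<open>auto simp: inj_on_def\<close>)
  also have "\<dots> = of_nat M^r * (\<Sum>t=1..q. of_nat t ^ r)"
    by (simp add: sum_distrib_left power_mult_distrib)
  finally show ?thesis .
qed

theorem mainTheorem2:
  fixes a n r :: nat and k :: "nat \<Rightarrow> nat" and f g :: "nat \<Rightarrow> nat \<Rightarrow> complex"
  assumes "a \<ge> 1" "n \<ge> 1" "r \<ge> 1" "\<And>i. i \<in> {1..n} \<Longrightarrow> k i \<ge> 1"
  defines "K \<equiv> Lcm (k ` {1..n})"
  shows "(\<Sum>j = 1..K ^ a. of_nat j ^ r * (\<Prod>i = 1..n. s_fun a (f i) (g i) (k i) j))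
    = of_nat K ^ (a * r) / 2 * (\<Prod>i = 1..n. dirichlet_conv (f i) (g i) (k i))
      + of_nat K ^ (a * (r + 1)) / of_nat (r + 1) *
        (\<Sum>m = 0..r div 2. of_nat ((r + 1) choose (2 * m)) * of_real (bernoulli_num (2 * m))
            / of_nat K ^ (2 * a * m) *
          (\<Sum>d \<in> Pi\<^sub>E {1..n} (\<lambda>i. {e. e dvd k i}).
              of_nat (Lcm (d ` {1..n})) powi (int a * (2 * int m - 1)) *
              (\<Prod>i = 1..n. f i (d i) * g i (k i div d i))))"
proof -
  define I where "I = {1..n}"
  define P where "P = Pi\<^sub>E I (\<lambda>i. {e. e dvd k i})"
  define \<Phi> where "\<Phi> d = (\<Prod>i\<in>I. f i (d i) * g i (k i div d i))" for d
  define L where "L d = Lcm (d ` I)" for d :: "nat \<Rightarrow> nat"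
  define B where "B m = of_nat ((r + 1) choose (2 * m)) * (of_real (bernoulli_num (2 * m)) :: complex)" for m
  have finI: "finite I" by (simp add: I_def)
  have kpos: "\<And>i. i \<in> I \<Longrightarrow> 0 < k i" using assms(4) by (force simp: I_def)
  have fin_div: "\<And>i. i \<in> I \<Longrightarrow> finite {e. e dvd k i}" using kpos by (simp add: finite_divisors_nat)
  have finP: "finite P" unfolding P_def using finI fin_div by (intro finite_PiE) auto
  have "0 \<notin> k ` I" using kpos by (metis image_iff less_irrefl)
  hence K0: "K \<noteq> 0" unfolding K_def I_def[symmetric] using finI by (simp add: Lcm_0_iff)
  have LK: "L d dvd K" if "d \<in> P" for d
  proof -
    have "\<forall>i\<in>I. d i dvd K"
    proof
      fix i assume i: "i \<in> I"
      have "d i dvd k i" using that i by (auto simp: P_def PiE_iff)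
      also have "k i dvd K" unfolding K_def I_def[symmetric] using i by (simp add: dvd_Lcm)
      finally show "d i dvd K" .
    qed
    thus ?thesis by (simp add: L_def Lcm_dvd_iff)
  qed
  have L0: "L d \<noteq> 0" if "d \<in> P" for d using LK[OF that] K0 by auto
  have A: "(\<Prod>i\<in>I. s_fun a (f i) (g i) (k i) j) = (\<Sum>d\<in>P. if L d ^ a dvd j then \<Phi> d else 0)" for j
  proof -
    have "(\<Prod>i\<in>I. s_fun a (f i) (g i) (k i) j) = (\<Sum>d\<in>Pi\<^sub>E I (\<lambda>i. {e. e dvd k i \<and> e ^ a dvd j}). \<Phi> d)"
      unfolding s_fun_def \<Phi>_def using finI fin_div by (intro prod_sum_PiE) auto
    also have "Pi\<^sub>E I (\<lambda>i. {e. e dvd k i \<and> e ^ a dvd j}) = {d\<in>P. L d ^ a dvd j}"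
      using finI by (auto simp: P_def L_def Lcm_pow[symmetric] Lcm_dvd_iff PiE_iff extensional_def)
    also have "(\<Sum>d\<in>{d\<in>P. L d ^ a dvd j}. \<Phi> d) = (\<Sum>d\<in>P. if L d ^ a dvd j then \<Phi> d else 0)"
      by (rule sum.inter_filter[OF finP])
    finally show ?thesis .
  qed
  have "(\<Sum>j = 1..K ^ a. of_nat j ^ r * (\<Prod>i\<in>I. s_fun a (f i) (g i) (k i) j))
     = (\<Sum>j = 1..K ^ a. \<Sum>d\<in>P. if L d ^ a dvd j then of_nat j ^ r * \<Phi> d else 0)"
    unfolding A by (rule sum.cong, simp, subst sum_distrib_left, rule sum.cong, auto)
  also have "\<dots> = (\<Sum>d\<in>P. \<Sum>j = 1..K ^ a. if L d ^ a dvd j then of_nat j ^ r * \<Phi> d else 0)"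
    by (rule sum.swap)
  also have "\<dots> = (\<Sum>d\<in>P. \<Phi> d * (\<Sum>j = 1..K ^ a. if L d ^ a dvd j then of_nat j ^ r else 0))"
    by (rule sum.cong, simp, subst sum_distrib_left, rule sum.cong, auto)
  also have "\<dots> = (\<Sum>d\<in>P. \<Phi> d * (of_nat K ^ (a * r) / 2)
      + (\<Sum>m = 0..r div 2. of_nat K ^ (a * (r + 1)) / of_nat (r + 1) * (B m / of_nat K ^ (2 * a * m)) *
          (of_nat (L d) powi (int a * (2 * int m - 1)) * \<Phi> d)))"
  proof (rule sum.cong[OF refl])
    fix d assume d: "d \<in> P"
    define q where "q = K ^ a div L d ^ a"
    have Mq: "L d ^ a * q = K ^ a" unfolding q_def using dvd_power_same[OF LK[OF d], of a] by simp
    define x where "x = (of_nat (L d) :: complex) ^ a"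
    define y where "y = (of_nat K :: complex) ^ a"
    have x0: "x \<noteq> 0" using L0[OF d] by (simp add: x_def)
    have y0: "y \<noteq> 0" using K0 by (simp add: y_def)
    have xy: "x * of_nat q = y" unfolding x_def y_def
      by (metis Mq of_nat_mult of_nat_power)
    have "(\<Sum>j = 1..K ^ a. if L d ^ a dvd j then (of_nat j :: complex) ^ r else 0)
        = of_nat (L d ^ a) ^ r * (\<Sum>t=1..q. of_nat t ^ r)"
      unfolding Mq[symmetric] by (rule mult_sum) (use L0[OF d] in simp)
    also have "\<dots> = x ^ r * (of_nat q ^ r / 2 + (\<Sum>m=0..r div 2. B m * of_nat q ^ (r+1-2*m)) / of_nat (r+1))"
      by (subst faul_c[OF assms(3)]) (simp add: x_def B_def)
    also have "\<dots> = y ^ r / 2 + (\<Sum>m=0..r div 2. B m * (x ^ r * of_nat q ^ (r+1-2*m))) / of_nat (r+1)"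
      by (simp add: xy[symmetric] power_mult_distrib sum_distrib_left sum_divide_distrib algebra_simps)
    also have "\<dots> = y ^ r / 2 + (\<Sum>m=0..r div 2. B m * (y^(r+1) / y^(2*m) * (x^(2*m) / x))) / of_nat (r+1)"
    proof -
      have kp: "m \<le> r div 2 \<Longrightarrow> x^r * of_nat q^(r+1-2*m) = y^(r+1)/y^(2*m)*(x^(2*m)/x)" for m
        by (rule key_pow[OF x0 y0 xy]) auto
      have "(\<Sum>m=0..r div 2. B m * (x ^ r * of_nat q ^ (r+1-2*m))) = (\<Sum>m=0..r div 2. B m * (y^(r+1) / y^(2*m) * (x^(2*m) / x)))"
        by (rule sum.cong[OF refl]) (simp only: kp atLeastAtMost_iff)
      thus ?thesis by (simp only:)
    qed
    finally have e: "(\<Sum>j = 1..K ^ a. if L d ^ a dvd j then (of_nat j :: complex) ^ r else 0) = \<dots>" .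
    have pw: "(of_nat (L d) :: complex) powi (int a * (2 * int m - 1)) = x^(2*m) / x" for m
      unfolding x_def by (rule powi_eq) (use L0[OF d] in simp)
    show "\<Phi> d * (\<Sum>j = 1..K ^ a. if L d ^ a dvd j then of_nat j ^ r else 0) = \<Phi> d * (of_nat K ^ (a * r) / 2)
      + (\<Sum>m = 0..r div 2. of_nat K ^ (a * (r + 1)) / of_nat (r + 1) * (B m / of_nat K ^ (2 * a * m)) *
          (of_nat (L d) powi (int a * (2 * int m - 1)) * \<Phi> d))"
    proof -
      have yr: "(of_nat K :: complex) ^ (a*r) = y^r" unfolding y_def by (simp add: power_mult)
      have yr1: "(of_nat K :: complex) ^ (a*(r+1)) = y^(r+1)" unfolding y_def by (simp only: power_mult)
      have y2m: "(of_nat K :: complex) ^ (2*a*m) = y^(2*m)" for m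
        unfolding y_def power_mult[symmetric] by (simp add: ac_simps)
      have "\<Phi> d * (y ^ r / 2 + (\<Sum>m=0..r div 2. B m * (y^(r+1) / y^(2*m) * (x^(2*m) / x))) / of_nat (r+1))
         = \<Phi> d * (y ^ r / 2) + (\<Sum>m=0..r div 2. \<Phi> d * (B m * (y^(r+1) / y^(2*m) * (x^(2*m) / x))) / of_nat (r+1))"
        by (simp only: distrib_left sum_distrib_left sum_divide_distrib times_divide_eq_right)
      also have "\<dots> = \<Phi> d * (y ^ r / 2) + (\<Sum>m=0..r div 2. y^(r+1) / of_nat (r + 1) * (B m / y^(2*m)) * (x^(2*m) / x * \<Phi> d))"
        by (rule arg_cong2[where f="(+)"], rule refl, rule sum.cong, rule refl) (simp add: field_simps)
      finally show ?thesis unfolding e pw yr yr1 y2m .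
    qed
  qed
  also have "\<dots> = of_nat K ^ (a * r) / 2 * (\<Sum>d\<in>P. \<Phi> d)
      + of_nat K ^ (a * (r + 1)) / of_nat (r + 1) *
        (\<Sum>m = 0..r div 2. B m / of_nat K ^ (2 * a * m) *
          (\<Sum>d\<in>P. of_nat (L d) powi (int a * (2 * int m - 1)) * \<Phi> d))"
  proof -
    let ?D = "(of_nat K :: complex) ^ (a * (r + 1)) / of_nat (r + 1)"
    let ?E = "\<lambda>m. B m / (of_nat K :: complex) ^ (2 * a * m)"
    let ?p = "\<lambda>d m. (of_nat (L d) :: complex) powi (int a * (2 * int m - 1)) * \<Phi> d"
    have "(\<Sum>d\<in>P. \<Phi> d * (of_nat K ^ (a * r) / 2) + (\<Sum>m = 0..r div 2. ?D * ?E m * ?p d m))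
       = (\<Sum>d\<in>P. \<Phi> d) * (of_nat K ^ (a * r) / 2) + (\<Sum>d\<in>P. \<Sum>m = 0..r div 2. ?D * ?E m * ?p d m)"
      by (simp only: sum.distrib sum_distrib_right)
    also have "(\<Sum>d\<in>P. \<Sum>m = 0..r div 2. ?D * ?E m * ?p d m) = (\<Sum>m = 0..r div 2. \<Sum>d\<in>P. ?D * ?E m * ?p d m)"
      by (rule sum.swap)
    also have "\<dots> = ?D * (\<Sum>m = 0..r div 2. ?E m * (\<Sum>d\<in>P. ?p d m))"
      by (simp only: sum_distrib_left mult.assoc)
    finally show ?thesis by (simp only: mult.commute)
  qed
  also have "(\<Sum>d\<in>P. \<Phi> d) = (\<Prod>i\<in>I. dirichlet_conv (f i) (g i) (k i))"
    unfolding dirichlet_conv_def \<Phi>_def P_def using finI fin_div by (intro prod_sum_PiE[symmetric]) auto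
  finally show ?thesis by (simp add: I_def P_def L_def \<Phi>_def B_def)
qed
end
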